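(* Let $\sigma>0$ and $k\in\mathbb{N}$ be such that $k^2\sigma\le1$. Then $\mathcal K_G^\sigma T_k$ is a polynomial of degree $k$ that satisfies \[ \|T_k-\mathcal K_G^\sigma T_k\|_\infty\le\tfrac12k^4\sigma^2\quad\text{and}\quad\|\mathcal K_G^\sigma T_k-T_k\|_{1,\mathrm{cheb}}\le k^{9/2}\sigma^2. \]
   Context: $T_k(x)=\cos(k\arccos x)$ is the Chebyshev polynomial of the first kind (as a polynomial on $\mathbb{R}$). $\mathcal K_G^\sigma(f)(x)=\int_{\mathbb{R}}\frac1{\sqrt{2\pi}\sigma}\exp\!\left(-\frac{(x-y)^2}{2\sigma^2}\right)f(y)\,dy$. $\|g\|_\infty=\sup_{x\in[-1,1]}|g(x)|$; for a univariate polynomial $p=\sum_jc_jT_j$, $\|p\|_{1,\mathrm{cheb}}=\sum_j|c_j|$. *)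

theory Defs
  imports "HOL-Analysis.Analysis" "HOL-Computational_Algebra.Polynomial"
begin

definition cheb_T :: "nat \<Rightarrow> real poly" where
  "cheb_T k = (THE p. \<forall>x\<in>{-1..1}. poly p x = cos (real k * arccos x))"

definition gauss_conv :: "real \<Rightarrow> (real \<Rightarrow> real) \<Rightarrow> real \<Rightarrow> real" where
  "gauss_conv \<sigma> f x =
     integral UNIV (\<lambda>y. (1 / (sqrt (2 * pi) * \<sigma>)) * exp (- ((x - y)^2) / (2 * \<sigma>^2)) * f y)"

definition sup_norm_11 :: "(real \<Rightarrow> real) \<Rightarrow> real" where
  "sup_norm_11 g = (SUP x\<in>{-1..1}. \<bar>g x\<bar>)"

definition cheb_coeff :: "real poly \<Rightarrow> nat \<Rightarrow> real" where
  "cheb_coeff p = (THE c. (\<forall>j>degree p. c j = 0) \<and>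
                        p = (\<Sum>j\<le>degree p. smult (c j) (cheb_T j)))"

definition cheb_norm1 :: "real poly \<Rightarrow> real" where
  "cheb_norm1 p = (\<Sum>j\<le>degree p. \<bar>cheb_coeff p j\<bar>)"

end

theory Submission
  imports Defs "HOL-Probability.Probability"
begin

definition pX :: "real poly" where "pX = [:0,1:]"

lemma two_mult_poly: "(2::real poly) * p = smult 2 p" by (simp add: numeral_poly)

lemma poly_pX[simp]: "poly pX x = x" by (simp add: pX_def)
lemma pderiv_pX[simp]: "pderiv pX = 1" by (simp add: pX_def pderiv_pCons)

fun chT :: "nat \<Rightarrow> real poly" where
  "chT 0 = 1" | "chT (Suc 0) = pX"
| "chT (Suc (Suc n)) = 2 * pX * chT (Suc n) - chT n"

fun chU :: "nat \<Rightarrow> real poly" where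
  "chU 0 = 1" | "chU (Suc 0) = 2 * pX"
| "chU (Suc (Suc n)) = 2 * pX * chU (Suc n) - chU n"

lemma chU_T: "chU (Suc n) - pX * chU n = chT (Suc n)"
proof (induction n rule: chT.induct)
  case 1 then show ?case by simp
next
  case 2 then show ?case by (simp add: algebra_simps)
next
  case (3 n)
  then show ?case by (simp only: chU.simps chT.simps) algebra
qed

lemma chU_rec2: "chU (Suc (Suc n)) = chU n + 2 * chT (Suc (Suc n))"
  using chU_T[of "Suc n"] by (simp only: chU.simps chT.simps) algebra

lemma pderiv_chT: "pderiv (chT (Suc n)) = smult (real (Suc n)) (chU n)"
proof (induction n rule: chT.induct)
  case 1 then show ?case by simp
next
  case 2 then show ?case by (simp add: pderiv_mult pderiv_diff two_mult_poly pderiv_smult)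
next
  case (3 n)
  have e: "chT (Suc (Suc n)) = pX * chU (Suc n) - chU n"
    using chU_T[of "Suc n"] by (simp only: chU.simps chT.simps)
  have "pderiv (chT (Suc (Suc (Suc n)))) = 2 * chT (Suc (Suc n)) + 2 * pX * pderiv (chT (Suc (Suc n))) - pderiv (chT (Suc n))"
    unfolding chT.simps(3)[of "Suc n"] by (simp add: pderiv_mult pderiv_diff two_mult_poly pderiv_smult smult_add_right algebra_simps del: chT.simps)
  also have "\<dots> = 2 * (pX * chU (Suc n) - chU n) + 2 * pX * smult (real (Suc (Suc n))) (chU (Suc n)) - smult (real (Suc n)) (chU n)"
    using 3 e by simp
  also have "\<dots> = smult (real (Suc (Suc (Suc n)))) (2 * pX * chU (Suc n) - chU n)"
    by (subst poly_eq_poly_eq_iff[symmetric]) (auto simp: algebra_simps)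
  finally show ?case by simp
qed

lemma chT_cos: "poly (chT n) (cos t) = cos (real n * t)"
proof (induction n rule: chT.induct)
  case (3 n)
  have "cos (real (Suc (Suc n)) * t) = 2 * cos t * cos (real (Suc n) * t) - cos (real n * t)"
  proof -
    have a: "real (Suc (Suc n)) * t = real (Suc n) * t + t" and b: "real n * t = real (Suc n) * t - t"
      by (simp_all add: algebra_simps)
    show ?thesis unfolding a b cos_add cos_diff by simp
  qed
  then show ?case using 3 by simp
qed simp_all

lemma chT_bound: "x \<in> {-1..1} \<Longrightarrow> \<bar>poly (chT n) x\<bar> \<le> 1"
  using chT_cos[of n "arccos x"] by (simp add: cos_arccos)

lemma chT_one: "poly (chT n) 1 = 1"
  using chT_cos[of n 0] by simp

lemma chU_one: "poly (chU n) 1 = real n + 1"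
  by (induction n rule: chU.induct) simp_all

lemma cheb_T_eq: "cheb_T k = chT k"
proof -
  have P: "\<forall>x\<in>{-1..1}. poly (chT k) x = cos (real k * arccos x)"
    by (metis atLeastAtMost_iff chT_cos cos_arccos)
  have U: "p = chT k" if "\<forall>x\<in>{-1..1}. poly p x = cos (real k * arccos x)" for p
  proof (rule ccontr)
    assume "p \<noteq> chT k"
    then have "finite {x. poly (p - chT k) x = 0}" using poly_roots_finite[of "p - chT k"] by auto
    moreover have "{-1..1::real} \<subseteq> {x. poly (p - chT k) x = 0}" using that P by auto
    ultimately have "finite {-1..1::real}" by (rule finite_subset[rotated])
    then show False using infinite_Icc[of "-1" "1::real"] by simp
  qed
  show ?thesis unfolding cheb_T_def using P U by (rule the_equality)
qed

lemma chU_deriv_one: "3 * poly (pderiv (chU n)) 1 = real n * (real n + 1) * (real n + 2)"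
proof (induction n rule: chU.induct)
  case 2 then show ?case by (simp add: pderiv_mult)
next
  case (3 n)
  have "poly (pderiv (chU (Suc (Suc n)))) 1 = 2 * poly (chU (Suc n)) 1 + 2 * poly (pderiv (chU (Suc n))) 1 - poly (pderiv (chU n)) 1"
    by (simp add: pderiv_mult pderiv_diff)
  then show ?case using 3 by (simp add: chU_one algebra_simps)
qed simp

lemma degree_chT: "degree (chT n) = n \<and> chT n \<noteq> 0"
proof (induction n rule: chT.induct)
  case 2 then show ?case by (simp add: pX_def)
next
  case (3 n)
  have nz: "2 * pX * chT (Suc n) \<noteq> 0" using 3 by (simp add: pX_def two_mult_poly)
  have d: "degree (2 * pX * chT (Suc n)) = Suc (Suc n)"
    using 3 by (simp add: pX_def degree_mult_eq two_mult_poly)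
  then have "degree (chT (Suc (Suc n))) = Suc (Suc n)" using 3 by (simp add: degree_add_eq_left diff_conv_add_uminus del: add_uminus_conv_diff)
  then show ?case by auto
qed simp


lemma pderiv_sum': "pderiv (sum f A) = (\<Sum>x\<in>A. pderiv (f x))"
  using higher_pderiv_sum[of 1 f A] by simp

lemma smult_sum_r: "smult a (sum f A) = (\<Sum>x\<in>A. smult a (f x))"
  by (induction A rule: infinite_finite_induct) (simp_all add: smult_add_right)

definition chcone :: "nat \<Rightarrow> real poly \<Rightarrow> bool" where
  "chcone N p \<longleftrightarrow> (\<exists>c. (\<forall>j. 0 \<le> c j) \<and> p = (\<Sum>j\<le>N. smult (c j) (chT j)))"

lemma cone_0: "chcone N 0"
  unfolding chcone_def by (rule exI[of _ "\<lambda>_. 0"]) simp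

lemma cone_T: "j \<le> N \<Longrightarrow> chcone N (chT j)"
proof -
  assume j: "j \<le> N"
  have "(\<Sum>i\<le>N. smult (if i = j then 1 else 0) (chT i)) = (\<Sum>i\<le>N. if i = j then chT i else 0)"
    by (rule sum.cong) auto
  also have "\<dots> = chT j" using j by (simp add: sum.delta')
  finally show ?thesis unfolding chcone_def
    by (intro exI[of _ "\<lambda>i. if i = j then 1 else 0"]) auto
qed

lemma cone_add: "chcone N p \<Longrightarrow> chcone N q \<Longrightarrow> chcone N (p + q)"
  unfolding chcone_def
proof (elim exE conjE)
  fix c d assume "\<forall>j. 0 \<le> c j" "p = (\<Sum>j\<le>N. smult (c j) (chT j))" "\<forall>j. 0 \<le> d j" "q = (\<Sum>j\<le>N. smult (d j) (chT j))"
  then show "\<exists>e. (\<forall>j. 0 \<le> e j) \<and> p + q = (\<Sum>j\<le>N. smult (e j) (chT j))"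
    by (intro exI[of _ "\<lambda>j. c j + d j"]) (simp add: add_nonneg_nonneg smult_add_left sum.distrib)
qed

lemma cone_smult: "chcone N p \<Longrightarrow> 0 \<le> a \<Longrightarrow> chcone N (smult a p)"
  unfolding chcone_def
proof (elim exE conjE)
  fix c assume "\<forall>j. 0 \<le> c j" "p = (\<Sum>j\<le>N. smult (c j) (chT j))" "0 \<le> a"
  then show "\<exists>e. (\<forall>j. 0 \<le> e j) \<and> smult a p = (\<Sum>j\<le>N. smult (e j) (chT j))"
    by (intro exI[of _ "\<lambda>j. a * c j"]) (simp add: smult_sum_r)
qed

lemma cone_mono: "chcone N p \<Longrightarrow> N \<le> M \<Longrightarrow> chcone M p"
  unfolding chcone_def
proof (elim exE conjE)
  fix c assume c: "\<forall>j. 0 \<le> c j" "p = (\<Sum>j\<le>N. smult (c j) (chT j))" and NM: "N \<le> M"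
  have "(\<Sum>j\<le>M. smult (if j \<le> N then c j else 0) (chT j)) = (\<Sum>j\<le>N. smult (c j) (chT j))"
    by (rule sum.mono_neutral_cong_right) (use NM in auto)
  then show "\<exists>e. (\<forall>j. 0 \<le> e j) \<and> p = (\<Sum>j\<le>M. smult (e j) (chT j))"
    using c by (intro exI[of _ "\<lambda>j. if j \<le> N then c j else 0"]) auto
qed

lemma cone_sum: "finite A \<Longrightarrow> (\<And>i. i \<in> A \<Longrightarrow> chcone N (f i)) \<Longrightarrow> chcone N (sum f A)"
  by (induction A rule: finite_induct) (auto intro: cone_0 cone_add)

lemma cone_chU: "chcone n (chU n)"
proof (induction n rule: chU.induct)
  case 1 then show ?case using cone_T[of 0 0] by simp
next
  case 2 then show ?case using cone_smult[OF cone_T[of 1 1], of 2] by (simp add: two_mult_poly)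
next
  case (3 n)
  have "chcone (Suc (Suc n)) (chU n)" using cone_mono[of n "chU n" "Suc (Suc n)"] 3 by simp
  moreover have "chcone (Suc (Suc n)) (smult 2 (chT (Suc (Suc n))))" by (intro cone_smult cone_T) auto
  ultimately show ?case unfolding chU_rec2 two_mult_poly by (rule cone_add)
qed

lemma cone_pderiv_T: "j \<le> N \<Longrightarrow> chcone N (pderiv (chT j))"
proof (cases j)
  case 0 then show ?thesis by (simp add: cone_0)
next
  case (Suc m)
  assume "j \<le> N"
  then have "chcone N (chU m)" using cone_mono[OF cone_chU[of m]] Suc by simp
  then show ?thesis unfolding Suc pderiv_chT by (rule cone_smult) simp
qed

lemma cone_pderiv: "chcone N p \<Longrightarrow> chcone N (pderiv p)"
proof -
  assume "chcone N p"
  then obtain c where c: "\<forall>j. 0 \<le> c j" "p = (\<Sum>j\<le>N. smult (c j) (chT j))" unfolding chcone_def by auto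
  have "pderiv p = (\<Sum>j\<le>N. smult (c j) (pderiv (chT j)))" using c by (simp add: pderiv_sum' pderiv_smult)
  also have "chcone N \<dots>" using c by (intro cone_sum cone_smult cone_pderiv_T) auto
  finally show ?thesis .
qed

lemma cone_higher: "chcone N p \<Longrightarrow> chcone N ((pderiv ^^ m) p)"
  by (induction m) (auto intro: cone_pderiv)

lemma cone_bound: "chcone N p \<Longrightarrow> x \<in> {-1..1} \<Longrightarrow> \<bar>poly p x\<bar> \<le> poly p 1"
proof -
  assume "chcone N p" and x: "x \<in> {-1..1}"
  then obtain c where c: "\<forall>j. 0 \<le> c j" "p = (\<Sum>j\<le>N. smult (c j) (chT j))" unfolding chcone_def by auto
  have "\<bar>poly p x\<bar> = \<bar>\<Sum>j\<le>N. c j * poly (chT j) x\<bar>" using c by (simp add: poly_sum)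
  also have "\<dots> \<le> (\<Sum>j\<le>N. \<bar>c j * poly (chT j) x\<bar>)" by (rule sum_abs)
  also have "\<dots> \<le> (\<Sum>j\<le>N. c j)"
  proof (rule sum_mono)
    fix j show "\<bar>c j * poly (chT j) x\<bar> \<le> c j"
      using chT_bound[OF x, of j] c(1) by (simp add: abs_mult mult_left_le)
  qed
  also have "\<dots> = poly p 1" using c by (simp add: poly_sum chT_one)
  finally show ?thesis .
qed

lemma poly_pderiv_chT_one: "poly (pderiv (chT j)) 1 = real j ^ 2"
  by (cases j) (simp_all add: pderiv_chT chU_one power2_eq_square)

lemma cone_markov: "chcone N p \<Longrightarrow> poly (pderiv p) 1 \<le> real N ^ 2 * poly p 1"
proof -
  assume "chcone N p"
  then obtain c where c: "\<forall>j. 0 \<le> c j" "p = (\<Sum>j\<le>N. smult (c j) (chT j))" unfolding chcone_def by auto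
  have "poly (pderiv p) 1 = (\<Sum>j\<le>N. c j * real j ^ 2)"
    using c by (simp add: poly_sum pderiv_sum' pderiv_smult poly_pderiv_chT_one)
  also have "\<dots> \<le> (\<Sum>j\<le>N. c j * real N ^ 2)"
    by (rule sum_mono) (use c(1) in \<open>auto intro!: mult_left_mono power_mono\<close>)
  also have "\<dots> = real N ^ 2 * poly p 1" using c by (simp add: poly_sum chT_one sum_distrib_right mult.commute)
  finally show ?thesis .
qed

lemma coeff_chsum: "coeff (\<Sum>j\<le>M. smult (a j) (chT j)) M = a M * coeff (chT M) M"
proof -
  have "coeff (\<Sum>j\<le>M. smult (a j) (chT j)) M = (\<Sum>j\<le>M. a j * coeff (chT j) M)" by (simp add: coeff_sum)
  also have "\<dots> = a M * coeff (chT M) M"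
    by (rule sum.mono_neutral_left[where S="{M}", simplified, symmetric, THEN trans])
       (auto intro!: coeff_eq_0 simp: degree_chT)
  finally show ?thesis .
qed

lemma chsum_zero: "(\<Sum>j\<le>M. smult (a j) (chT j)) = 0 \<Longrightarrow> \<forall>j\<le>M. a j = 0"
proof (induction M)
  case 0 then show ?case by simp
next
  case (Suc M)
  have "a (Suc M) * coeff (chT (Suc M)) (Suc M) = 0" using coeff_chsum[of a "Suc M", unfolded Suc.prems] by simp
  then have aM: "a (Suc M) = 0" using degree_chT[of "Suc M"] by (metis leading_coeff_0_iff mult_eq_0_iff)
  then have "(\<Sum>j\<le>M. smult (a j) (chT j)) = 0" using Suc.prems by simp
  then show ?case using Suc.IH aM le_Suc_eq by auto
qed


lemma sum_min_aux:
  fixes f :: "nat \<Rightarrow> 'a::comm_monoid_add"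
  assumes "\<forall>j. D < j \<and> j \<le> N \<longrightarrow> f j = 0"
  shows "(\<Sum>j\<le>D. if j \<le> min N D then f j else 0) = (\<Sum>j\<le>N. f j)"
proof -
  have "(\<Sum>j\<le>D. if j \<le> min N D then f j else 0) = (\<Sum>j\<le>min N D. f j)"
    by (rule sum.mono_neutral_cong_right) auto
  also have "\<dots> = (\<Sum>j\<le>N. f j)"
  proof (rule sum.mono_neutral_cong_left)
    show "\<forall>i\<in>{..N} - {..min N D}. f i = 0"
    proof
      fix i assume "i \<in> {..N} - {..min N D}"
      then have "D < i \<and> i \<le> N" by auto
      then show "f i = 0" using assms by blast
    qed
  qed auto
  finally show ?thesis .
qed

lemma cheb_norm1_cone: "chcone N p \<Longrightarrow> cheb_norm1 p = poly p 1"
proof -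
  assume "chcone N p"
  then obtain c where c: "\<forall>j. 0 \<le> c j" "p = (\<Sum>j\<le>N. smult (c j) (chT j))" unfolding chcone_def by auto
  have Z: "\<forall>j. degree p < j \<and> j \<le> N \<longrightarrow> c j = 0"
  proof (rule ccontr)
    assume "\<not> ?thesis"
    then obtain j0 where j0: "degree p < j0" "j0 \<le> N" "c j0 \<noteq> 0" by auto
    define S where "S = {j. j \<le> N \<and> c j \<noteq> 0}"
    define M where "M = Max S"
    have fin: "finite S" unfolding S_def by auto
    have "j0 \<in> S" using j0 unfolding S_def by auto
    then have "j0 \<le> M" "M \<in> S" using fin unfolding M_def by (auto intro: Max_ge Max_in)
    then have M: "j0 \<le> M" "M \<le> N" "c M \<noteq> 0" unfolding S_def by auto
    have "p = (\<Sum>j\<le>M. smult (c j) (chT j))"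
      unfolding c(2)
    proof (rule sum.mono_neutral_right)
      show "\<forall>i\<in>{..N} - {..M}. smult (c i) (chT i) = 0"
      proof
        fix i assume i: "i \<in> {..N} - {..M}"
        have "c i = 0"
        proof (rule ccontr)
          assume "c i \<noteq> 0" then have "i \<in> S" using i unfolding S_def by auto
          then have "i \<le> M" using fin unfolding M_def by (auto intro: Max_ge)
          then show False using i by auto
        qed
        then show "smult (c i) (chT i) = 0" by simp
      qed
    qed (use M in auto)
    then have "coeff p M = c M * coeff (chT M) M" using coeff_chsum by simp
    also have "\<dots> \<noteq> 0" using M(3) degree_chT[of M] by (metis leading_coeff_0_iff mult_eq_0_iff)
    finally have "M \<le> degree p" by (rule le_degree)
    then show False using j0 M by auto
  qed
  define d where "d j = (if j \<le> min N (degree p) then c j else 0)" for j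
  have Zs: "\<forall>j. degree p < j \<and> j \<le> N \<longrightarrow> smult (c j) (chT j) = 0" using Z by auto
  have "(\<Sum>j\<le>degree p. smult (d j) (chT j)) = (\<Sum>j\<le>degree p. if j \<le> min N (degree p) then smult (c j) (chT j) else 0)"
    by (rule sum.cong) (auto simp: d_def)
  also have "\<dots> = p" by (subst sum_min_aux[OF Zs]) (rule c(2)[symmetric])
  finally have pd: "p = (\<Sum>j\<le>degree p. smult (d j) (chT j))" by simp
  have CT: "cheb_T = chT" using cheb_T_eq by auto
  have uniq: "e = d" if e: "(\<forall>j>degree p. e j = 0) \<and> p = (\<Sum>j\<le>degree p. smult (e j) (cheb_T j))" for e
  proof
    fix j
    have "(\<Sum>j\<le>degree p. smult (e j - d j) (chT j)) = 0"
      using e pd unfolding CT by (simp add: smult_diff_left sum_subtractf)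
    then have "\<forall>j\<le>degree p. e j - d j = 0" by (rule chsum_zero)
    then show "e j = d j" using e unfolding d_def by (cases "j \<le> degree p") auto
  qed
  have "cheb_coeff p = d"
    unfolding cheb_coeff_def
  proof (rule the_equality)
    show "(\<forall>j>degree p. d j = 0) \<and> p = (\<Sum>j\<le>degree p. smult (d j) (cheb_T j))"
      using pd unfolding CT d_def by auto
  qed (rule uniq)
  then have "cheb_norm1 p = (\<Sum>j\<le>degree p. d j)"
    unfolding cheb_norm1_def d_def using c(1) by (intro sum.cong) auto
  also have "\<dots> = (\<Sum>j\<le>N. c j)" unfolding d_def by (rule sum_min_aux[OF Z])
  also have "\<dots> = poly p 1" using c(2) by (simp add: poly_sum chT_one)
  finally show ?thesis .
qed


lemma higher_pderiv_zero: "degree (p::real poly) < m \<Longrightarrow> (pderiv ^^ m) p = 0"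
proof (induction m arbitrary: p)
  case 0 then show ?case by simp
next
  case (Suc m)
  show ?case
  proof (cases "degree (pderiv p) < m")
    case True
    have "(pderiv ^^ Suc m) p = (pderiv ^^ m) (pderiv p)" by (simp only: funpow_Suc_right o_apply)
    then show ?thesis using Suc.IH[OF True] by simp
  next
    case False
    then have "degree p = 0" using Suc.prems by (simp add: degree_pderiv)
    then have "pderiv p = 0" by (simp add: pderiv_eq_0_iff)
    have "(pderiv ^^ Suc m) p = (pderiv ^^ m) (pderiv p)" by (simp only: funpow_Suc_right o_apply)
    then show ?thesis using \<open>pderiv p = 0\<close> by (simp add: higher_pderiv_0)
  qed
qed

lemma poly_taylor:
  fixes p :: "real poly"
  assumes "degree p < n"
  shows "poly p y = (\<Sum>m<n. poly ((pderiv ^^ m) p) x / fact m * (y - x) ^ m)"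
proof -
  define diff where "diff m h = poly ((pderiv ^^ m) p) (h + x)" for m h
  have D: "\<forall>m h. DERIV (diff m) h :> diff (Suc m) h"
  proof (intro allI)
    fix m h
    have "DERIV (\<lambda>t. poly ((pderiv ^^ m) p) t) (h + x) :> poly (pderiv ((pderiv ^^ m) p)) (h + x)"
      by (rule poly_DERIV)
    then show "DERIV (diff m) h :> diff (Suc m) h"
      unfolding diff_def by (simp add: DERIV_shift)
  qed
  obtain t where "poly p (y - x + x) = (\<Sum>m<n. (diff m 0 / fact m) * (y - x) ^ m) + (diff n t / fact n) * (y - x) ^ n"
    using Maclaurin_all_le[of diff "\<lambda>h. poly p (h + x)", OF _ D, of "y - x" n] unfolding diff_def by auto
  then show ?thesis using higher_pderiv_zero[OF assms] unfolding diff_def by simp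
qed

definition gmom :: "real \<Rightarrow> nat \<Rightarrow> real" where
  "gmom \<sigma> n = (if even n then fact n / ((2 / \<sigma>\<^sup>2) ^ (n div 2) * fact (n div 2)) else 0)"

lemma gmom_int: assumes "\<sigma> > 0" shows "has_bochner_integral lborel (\<lambda>y. normal_density x \<sigma> y * (y - x) ^ n) (gmom \<sigma> n)"
proof (cases "even n")
  case True
  then obtain k where n: "n = 2 * k" by auto
  show ?thesis using normal_moment_even[of \<sigma> x k] assms unfolding n gmom_def by simp
next
  case False
  then obtain k where n: "n = 2 * k + 1" using oddE by blast
  show ?thesis using normal_moment_odd[of \<sigma> x k] assms unfolding n gmom_def by simp
qed

lemma sum_pairs: "(\<Sum>n<2 * (m::nat). g n :: real) = (\<Sum>j<m. g (2 * j) + g (2 * j + 1))"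
  by (induction m) (simp_all add: algebra_simps)

lemma gauss_conv_poly:
  assumes s: "\<sigma> > 0" and dp: "degree p < 2 * Suc K"
  shows "gauss_conv \<sigma> (poly p) x = (\<Sum>j\<le>K. \<sigma> ^ (2 * j) / (2 ^ j * fact j) * poly ((pderiv ^^ (2 * j)) p) x)"
proof -
  define a where "a m = poly ((pderiv ^^ m) p) x / fact m" for m
  have eqf: "(1 / (sqrt (2 * pi) * \<sigma>)) * exp (- ((x - y)^2) / (2 * \<sigma>^2)) * poly p y
      = (\<Sum>m<2 * Suc K. a m * (normal_density x \<sigma> y * (y - x) ^ m))" for y
  proof -
    have "sqrt (2 * pi * \<sigma>\<^sup>2) = sqrt (2 * pi) * \<sigma>" using s by (simp add: real_sqrt_mult)
    moreover have "(x - y)^2 = (y - x)^2" by (simp add: power2_commute)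
    ultimately have "(1 / (sqrt (2 * pi) * \<sigma>)) * exp (- ((x - y)^2) / (2 * \<sigma>^2)) = normal_density x \<sigma> y"
      unfolding normal_density_def by simp
    moreover have "poly p y = (\<Sum>m<2 * Suc K. a m * (y - x) ^ m)"
      using poly_taylor[OF dp, of y x] unfolding a_def by simp
    ultimately have "(1 / (sqrt (2 * pi) * \<sigma>)) * exp (- ((x - y)^2) / (2 * \<sigma>^2)) * poly p y
       = normal_density x \<sigma> y * (\<Sum>m<2 * Suc K. a m * (y - x) ^ m)" by simp
    also have "\<dots> = (\<Sum>m<2 * Suc K. a m * (normal_density x \<sigma> y * (y - x) ^ m))"
      unfolding sum_distrib_left by (rule sum.cong) (simp_all add: mult.left_commute)
    finally show ?thesis .
  qed
  have HB: "has_bochner_integral lborel (\<lambda>y. \<Sum>m<2 * Suc K. a m * (normal_density x \<sigma> y * (y - x) ^ m))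
          (\<Sum>m<2 * Suc K. a m * gmom \<sigma> m)"
    by (intro has_bochner_integral_sum has_bochner_integral_mult_right gmom_int s)
  then have "((\<lambda>y. \<Sum>m<2 * Suc K. a m * (normal_density x \<sigma> y * (y - x) ^ m)) has_integral
          (\<Sum>m<2 * Suc K. a m * gmom \<sigma> m)) UNIV"
    using has_integral_integral_lborel[OF integrable.intros[OF HB]]
      has_bochner_integral_integral_eq[OF HB] by simp
  then have "gauss_conv \<sigma> (poly p) x = (\<Sum>m<2 * Suc K. a m * gmom \<sigma> m)"
    unfolding gauss_conv_def eqf by (rule integral_unique)
  also have "\<dots> = (\<Sum>j<Suc K. a (2 * j) * gmom \<sigma> (2 * j) + a (2 * j + 1) * gmom \<sigma> (2 * j + 1))"
    by (rule sum_pairs)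
  also have "\<dots> = (\<Sum>j\<le>K. \<sigma> ^ (2 * j) / (2 ^ j * fact j) * poly ((pderiv ^^ (2 * j)) p) x)"
    unfolding lessThan_Suc_atMost
  proof (rule sum.cong)
    fix j
    have "(2 / \<sigma>\<^sup>2) ^ j = 2 ^ j / \<sigma> ^ (2 * j)" by (simp add: power_divide power_mult)
    then show "a (2 * j) * gmom \<sigma> (2 * j) + a (2 * j + 1) * gmom \<sigma> (2 * j + 1) =
        \<sigma> ^ (2 * j) / (2 ^ j * fact j) * poly ((pderiv ^^ (2 * j)) p) x"
      unfolding a_def gmom_def using s by simp
  qed simp
  finally show ?thesis .
qed


lemma geo_tail: "(\<Sum>j\<in>{2..n}. (1/2::real) ^ (j + 1)) \<le> 1/4"
proof -
  have "(\<Sum>j\<in>{2..n}. (1/2::real) ^ (j + 1)) + (1/2) ^ (max n 1 + 1) \<le> 1/4" for n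
  proof (induction n)
    case 0 then show ?case by simp
  next
    case (Suc n)
    show ?case
    proof (cases "n = 0")
      case True then show ?thesis by simp
    next
      case False
      then have "{2..Suc n} = insert (Suc n) {2..n}" "max (Suc n) 1 = Suc n" "max n 1 = n" by auto
      then show ?thesis using Suc.IH by simp
    qed
  qed
  from this[of n] show ?thesis using zero_le_power[of "1/2::real" "max n 1 + 1"] by linarith
qed

lemma higher_T_one_bound: "poly ((pderiv ^^ m) (chT k)) 1 \<le> real k ^ (2 * m)"
proof (induction m)
  case 0 then show ?case by (simp add: chT_one)
next
  case (Suc m)
  have c: "chcone k ((pderiv ^^ m) (chT k))" by (intro cone_higher cone_T) simp
  have "poly ((pderiv ^^ Suc m) (chT k)) 1 = poly (pderiv ((pderiv ^^ m) (chT k))) 1" by simp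
  also have "\<dots> \<le> real k ^ 2 * poly ((pderiv ^^ m) (chT k)) 1" by (rule cone_markov[OF c])
  also have "\<dots> \<le> real k ^ 2 * real k ^ (2 * m)" by (rule mult_left_mono[OF Suc.IH]) simp
  also have "\<dots> = real k ^ (2 * Suc m)" by (simp add: power_add[symmetric])
  finally show ?case .
qed

lemma T2_one: "poly ((pderiv ^^ 2) (chT k)) 1 \<le> real k ^ 4 / 3"
proof (cases k)
  case 0 then show ?thesis by (simp add: numeral_2_eq_2)
next
  case (Suc n)
  have "poly ((pderiv ^^ 2) (chT k)) 1 = real k * poly (pderiv (chU n)) 1"
    unfolding Suc by (simp add: numeral_2_eq_2 pderiv_chT pderiv_smult)
  also have "\<dots> = real k * (real n * (real n + 1) * (real n + 2)) / 3"
    using chU_deriv_one[of n] by simp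
  also have "\<dots> \<le> real k ^ 4 / 3"
    unfolding Suc by (simp add: power_def field_simps)
  finally show ?thesis .
qed


lemma term_bound:
  assumes s0: "\<sigma> > 0" and s1: "real k ^ 2 * \<sigma> \<le> 1" and j: "2 \<le> j"
  shows "\<sigma> ^ (2 * j) / (2 ^ j * fact j) * poly ((pderiv ^^ (2 * j)) (chT k)) 1
         \<le> (real k ^ 2 * \<sigma>) ^ 2 * (1/2) ^ (j + 1)"
proof -
  define s where "s = real k ^ 2 * \<sigma>"
  have s01: "0 \<le> s" "s \<le> 1" using s0 s1 unfolding s_def by auto
  have b: "poly ((pderiv ^^ (2 * j)) (chT k)) 1 \<le> real k ^ (4 * j)"
    using higher_T_one_bound[of "2 * j" k] by (simp add: mult.assoc)
  have f: "(2::real) \<le> fact j" using fact_mono[OF j] by (simp add: numeral_2_eq_2)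
  have pos: "0 < (2::real) ^ j * fact j" by simp
  have "\<sigma> ^ (2 * j) / (2 ^ j * fact j) * poly ((pderiv ^^ (2 * j)) (chT k)) 1
        \<le> \<sigma> ^ (2 * j) / (2 ^ j * fact j) * real k ^ (4 * j)"
    by (rule mult_left_mono[OF b]) (use s0 in simp)
  also have "\<dots> = s ^ (2 * j) / (2 ^ j * fact j)"
    unfolding s_def by (simp add: power_mult_distrib power_mult[symmetric] mult.commute)
  also have "\<dots> \<le> s ^ 2 / (2 ^ j * fact j)"
    by (rule divide_right_mono[OF power_decreasing]) (use s01 j in auto)
  also have "\<dots> \<le> s ^ 2 / (2 ^ j * 2)"
    by (rule divide_left_mono) (use f s01 in \<open>auto intro: mult_left_mono\<close>)
  also have "\<dots> = s ^ 2 * (1/2) ^ (j + 1)" by (simp add: power_divide field_simps)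
  finally show ?thesis unfolding s_def .
qed

lemma D_bound:
  assumes s0: "\<sigma> > 0" and s1: "real k ^ 2 * \<sigma> \<le> 1"
  shows "(\<Sum>j\<in>{1..k}. \<sigma> ^ (2 * j) / (2 ^ j * fact j) * poly ((pderiv ^^ (2 * j)) (chT k)) 1)
         \<le> 1/2 * real k ^ 4 * \<sigma> ^ 2"
proof (cases "k = 0")
  case True then show ?thesis by simp
next
  case False
  define t where "t j = \<sigma> ^ (2 * j) / (2 ^ j * fact j) * poly ((pderiv ^^ (2 * j)) (chT k)) 1" for j
  have "(\<Sum>j\<in>{1..k}. t j) = t 1 + (\<Sum>j\<in>{2..k}. t j)"
    using False by (subst sum.atLeast_Suc_atMost) (auto simp: numeral_2_eq_2)
  also have "t 1 \<le> \<sigma> ^ 2 / 2 * (real k ^ 4 / 3)"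
    unfolding t_def using T2_one[of k] s0 by (simp add: mult_left_mono)
  also have "(\<Sum>j\<in>{2..k}. t j) \<le> (\<Sum>j\<in>{2..k}. (real k ^ 2 * \<sigma>) ^ 2 * (1/2) ^ (j + 1))"
    unfolding t_def by (rule sum_mono) (rule term_bound[OF s0 s1], simp)
  also have "\<dots> = (real k ^ 2 * \<sigma>) ^ 2 * (\<Sum>j\<in>{2..k}. (1/2) ^ (j + 1))"
    by (simp add: sum_distrib_left)
  also have "\<dots> \<le> (real k ^ 2 * \<sigma>) ^ 2 * (1/4)"
    by (rule mult_left_mono[OF geo_tail]) simp
  finally have L: "(\<Sum>j\<in>{1..k}. t j) \<le> \<sigma> ^ 2 / 2 * (real k ^ 4 / 3) + (real k ^ 2 * \<sigma>) ^ 2 * (1/4)" by simp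
  have e: "(real k ^ 2 * \<sigma>) ^ 2 = real k ^ 4 * \<sigma> ^ 2" by (simp add: power_mult_distrib power_mult[symmetric])
  have "0 \<le> real k ^ 4 * \<sigma> ^ 2" by simp
  then have "(\<Sum>j\<in>{1..k}. t j) \<le> 1/2 * real k ^ 4 * \<sigma> ^ 2" using L unfolding e
  proof -
    assume a: "0 \<le> real k ^ 4 * \<sigma> ^ 2" "sum t {1..k} \<le> \<sigma>\<^sup>2 / 2 * (real k ^ 4 / 3) + real k ^ 4 * \<sigma>\<^sup>2 * (1 / 4)"
    have "\<sigma>\<^sup>2 / 2 * (real k ^ 4 / 3) = 1/6 * (real k ^ 4 * \<sigma> ^ 2)" "1/2 * real k ^ 4 * \<sigma>\<^sup>2 = 1/2 * (real k ^ 4 * \<sigma> ^ 2)"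
      "real k ^ 4 * \<sigma>\<^sup>2 * (1 / 4) = 1/4 * (real k ^ 4 * \<sigma> ^ 2)" by simp_all
    then show ?thesis using a by linarith
  qed
  then show ?thesis unfolding t_def .
qed


theorem lemma9:
  fixes \<sigma> :: real and k :: nat
  assumes "\<sigma> > 0" and "real k ^ 2 * \<sigma> \<le> 1"
  shows "\<exists>q :: real poly. degree q = k \<and>
           (\<forall>x. gauss_conv \<sigma> (poly (cheb_T k)) x = poly q x) \<and>
           sup_norm_11 (\<lambda>x. poly (cheb_T k) x - gauss_conv \<sigma> (poly (cheb_T k)) x)
             \<le> 1/2 * real k ^ 4 * \<sigma>^2 \<and>
           cheb_norm1 (q - cheb_T k) \<le> real k powr (9/2) * \<sigma>^2"
proof -
  note s0 = assms(1) and s1 = assms(2)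
  define c where "c j = \<sigma> ^ (2 * j) / (2 ^ j * fact j)" for j :: nat
  define D where "D = (\<Sum>j\<in>{1..k}. smult (c j) ((pderiv ^^ (2 * j)) (chT k)))"
  define q where "q = chT k + D"
  have dT: "degree (chT k) = k" using degree_chT by blast
  have polyD: "poly D y = (\<Sum>j\<in>{1..k}. c j * poly ((pderiv ^^ (2 * j)) (chT k)) y)" for y
    unfolding D_def by (simp add: poly_sum)
  have gc: "gauss_conv \<sigma> (poly (chT k)) x = poly q x" for x
  proof -
    have "gauss_conv \<sigma> (poly (chT k)) x = (\<Sum>j\<le>k. c j * poly ((pderiv ^^ (2 * j)) (chT k)) x)"
      using gauss_conv_poly[OF s0, of "chT k" k x] dT unfolding c_def by simp
    also have "\<dots> = (\<Sum>j\<in>{0..k}. c j * poly ((pderiv ^^ (2 * j)) (chT k)) x)"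
      by (simp add: atMost_atLeast0)
    also have "\<dots> = c 0 * poly (chT k) x + (\<Sum>j\<in>{1..k}. c j * poly ((pderiv ^^ (2 * j)) (chT k)) x)"
      by (subst sum.atLeast_Suc_atMost) simp_all
    also have "\<dots> = poly q x" unfolding q_def by (simp add: c_def polyD)
    finally show ?thesis .
  qed
  have degq: "degree q = k"
  proof (cases "k = 0")
    case True then show ?thesis unfolding q_def D_def using dT by simp
  next
    case False
    have "degree D \<le> k - 1" unfolding D_def
    proof (rule degree_sum_le)
      fix j assume "j \<in> {1..k}"
      then have "degree ((pderiv ^^ (2 * j)) (chT k)) \<le> k - 1" by (simp add: degree_higher_pderiv dT) arith
      then show "degree (smult (c j) ((pderiv ^^ (2 * j)) (chT k))) \<le> k - 1"
        using degree_smult_le order_trans by blast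
    qed simp
    then have "degree D < degree (chT k)" using False dT by simp
    then show ?thesis unfolding q_def using dT by (simp add: degree_add_eq_left)
  qed
  have cD: "chcone k D" unfolding D_def
    by (intro cone_sum cone_smult cone_higher cone_T) (auto simp: c_def)
  have sup: "sup_norm_11 (\<lambda>x. poly (chT k) x - gauss_conv \<sigma> (poly (chT k)) x) \<le> poly D 1"
    unfolding sup_norm_11_def
  proof (rule cSUP_least)
    fix x :: real assume "x \<in> {-1..1}"
    then show "\<bar>poly (chT k) x - gauss_conv \<sigma> (poly (chT k)) x\<bar> \<le> poly D 1"
      using cone_bound[OF cD] unfolding gc q_def by simp
  qed simp
  have D1: "poly D 1 \<le> 1/2 * real k ^ 4 * \<sigma>^2"
    unfolding polyD c_def by (rule D_bound[OF s0 s1])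
  have cn: "cheb_norm1 (q - chT k) = poly D 1"
    unfolding q_def using cheb_norm1_cone[OF cD] by simp
  have pw: "1/2 * real k ^ 4 * \<sigma>^2 \<le> real k powr (9/2) * \<sigma>^2"
  proof (cases "k = 0")
    case True then show ?thesis by simp
  next
    case False
    then have k1: "1 \<le> real k" by simp
    have "real k ^ 4 = real k powr 4" using False by (simp add: powr_realpow)
    also have "\<dots> \<le> real k powr (9/2)" by (rule powr_mono) (use k1 in auto)
    finally have "1/2 * real k ^ 4 \<le> real k powr (9/2)" using zero_le_power[of "real k" 4] by linarith
    then show ?thesis by (rule mult_right_mono) simp
  qed
  show ?thesis unfolding cheb_T_eq
    using degq gc sup D1 cn pw by (intro exI[of _ q]) auto
qed

end
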